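(* For every integer $n\ge0$ and every real $s>-1$, \[ \int_0^1 p_n(x)x^s\,dx=(-1)^n\frac{(\tfrac12-\tfrac s2)_n}{(s+1)_{n+1}},\qquad \int_0^1 q_n(x)x^s\,dx=(-1)^n\frac{(-\tfrac s2)_n}{(s+1)_{n+1}}. \]
   Context: Pochhammer symbol: $(a)_0=1$, $(a)_n=a(a+1)\cdots(a+n-1)$. For real $a$ and integer $n\ge0$, $\binom{n+a}{n}:=\frac{(a+1)_n}{n!}$. Define \[ p_n(x)=\sum_{k=0}^n\binom nk\binom{n+\frac k2}{n}(-1)^{n-k}x^k,\qquad q_n(x)=\sum_{k=0}^n\binom nk\binom{n+\frac{k-1}2}{n}(-1)^{n-k}x^k. \] *)

theory Defs
  imports "HOL-Analysis.Analysis"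
begin

(* generalized binomial  binom(n+a, n) := (a+1)_n / n!  for real a *)
definition gbinom :: "nat \<Rightarrow> real \<Rightarrow> real" where
  "gbinom n a = pochhammer (a + 1) n / fact n"

definition p_poly :: "nat \<Rightarrow> real \<Rightarrow> real" where
  "p_poly n x = (\<Sum>k=0..n. real (n choose k) * gbinom n (real k / 2) * (-1) ^ (n - k) * x ^ k)"

definition q_poly :: "nat \<Rightarrow> real \<Rightarrow> real" where
  "q_poly n x = (\<Sum>k=0..n. real (n choose k) * gbinom n ((real k - 1) / 2) * (-1) ^ (n - k) * x ^ k)"

end

theory Submission
  imports Defs
begin

definition D :: "nat \<Rightarrow> (nat \<Rightarrow> real) \<Rightarrow> real" where
  "D n f = (\<Sum>k\<le>n. real (n choose k) * (-1)^k * f k)"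

lemma D_add: "D n (\<lambda>k. f k + g k) = D n f + D n g"
  by (simp add: D_def algebra_simps sum.distrib)
lemma D_cmult: "D n (\<lambda>k. c * f k) = c * D n f"
  by (simp add: D_def algebra_simps sum_distrib_left)

lemma D_ext: "D n f = (\<Sum>k\<le>Suc n. real (n choose k) * (-1)^k * f k)"
  by (simp add: D_def)

lemma D_pascal: "D (Suc n) f = D n f - D n (\<lambda>k. f (Suc k))"
proof -
  have "D (Suc n) f = f 0 + (\<Sum>i\<le>n. real (Suc n choose Suc i) * (-1)^(Suc i) * f (Suc i))"
    unfolding D_def by (subst sum.atMost_Suc_shift) simp
  also have "\<dots> = f 0 + (\<Sum>i\<le>n. real (n choose Suc i) * (-1)^(Suc i) * f (Suc i))
       - D n (\<lambda>k. f (Suc k))"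
    by (simp add: D_def algebra_simps sum.distrib sum_subtractf sum_negf)
  also have "f 0 + (\<Sum>i\<le>n. real (n choose Suc i) * (-1)^(Suc i) * f (Suc i)) = D n f"
    unfolding D_ext by (subst sum.atMost_Suc_shift) simp
  finally show ?thesis .
qed

lemma D_kmult: "D (Suc n) (\<lambda>k. real k * g k) = - real (Suc n) * D n (\<lambda>k. g (Suc k))"
proof -
  have "D (Suc n) (\<lambda>k. real k * g k) = (\<Sum>i\<le>n. real (Suc n choose Suc i) * (-1)^(Suc i) * (real (Suc i) * g (Suc i)))"
    unfolding D_def by (subst sum.atMost_Suc_shift) simp
  also have "\<dots> = (\<Sum>i\<le>n. - real (Suc n) * (real (n choose i) * (-1)^i * g (Suc i)))"
  proof (rule sum.cong[OF refl])
    fix i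
    have "real (Suc n choose Suc i) * real (Suc i) = real (Suc n) * real (n choose i)"
      using Suc_times_binomial_eq[of n i] by (metis of_nat_mult mult.commute)
    note h = this
    have "real (Suc n choose Suc i) * (-1)^(Suc i) * (real (Suc i) * g (Suc i)) =
       - ((real (Suc n choose Suc i) * real (Suc i)) * ((-1)^i * g (Suc i)))"
      by (simp add: algebra_simps)
    also have "\<dots> = - ((real (Suc n) * real (n choose i)) * ((-1)^i * g (Suc i)))"
      by (simp only: h)
    also have "\<dots> = - real (Suc n) * (real (n choose i) * (-1)^i * g (Suc i))"
      by (simp add: algebra_simps)
    finally show "real (Suc n choose Suc i) * (-1)^(Suc i) * (real (Suc i) * g (Suc i)) =
       - real (Suc n) * (real (n choose i) * (-1)^i * g (Suc i))" .
  qed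
  finally show ?thesis by (simp add: D_def sum_distrib_left)
qed

lemma D_vanish: "m < n \<Longrightarrow> D n (\<lambda>k. \<Prod>j<m. real k / 2 + b j) = 0"
proof (induction m arbitrary: n b)
  case 0
  then show ?case using choose_alternating_sum[of n, where 'a=real]
    by (simp add: D_def mult.commute)
next
  case (Suc m)
  then obtain n' where n: "n = Suc n'" by (cases n) auto
  have eq: "(\<lambda>k. \<Prod>j<Suc m. real k / 2 + b j) =
     (\<lambda>k. real k * ((1/2) * (\<Prod>j<m. real k / 2 + b j)) + b m * (\<Prod>j<m. real k / 2 + b j))"
    by (simp add: algebra_simps)
  have "D n' (\<lambda>k. (1/2) * (\<Prod>j<m. real (Suc k) / 2 + b j)) = 0"
  proof -
    have "(\<lambda>k. (\<Prod>j<m. real (Suc k) / 2 + b j)) = (\<lambda>k. (\<Prod>j<m. real k / 2 + (b j + 1/2)))"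
      by (simp add: algebra_simps add_divide_distrib)
    then have "D n' (\<lambda>k. (\<Prod>j<m. real (Suc k) / 2 + b j)) = 0"
      using Suc.IH[of n' "\<lambda>j. b j + 1/2"] Suc.prems n by simp
    then show ?thesis by (simp only: D_cmult mult_zero_right)
  qed
  then show ?case unfolding eq D_add D_cmult n D_kmult
    using Suc.IH[of "Suc n'" b] Suc.prems n by simp
qed

lemma D_base: "t > 0 \<Longrightarrow> D n (\<lambda>k. 1 / (real k + t)) = fact n / pochhammer t (Suc n)"
proof (induction n arbitrary: t)
  case 0
  then show ?case by (simp add: D_def)
next
  case (Suc n)
  have "D (Suc n) (\<lambda>k. 1 / (real k + t)) = fact n / pochhammer t (Suc n) - fact n / pochhammer (t+1) (Suc n)"
    using Suc.IH[of t] Suc.IH[of "t+1"] Suc.prems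
    by (simp add: D_pascal algebra_simps)
  also have "\<dots> = fact (Suc n) / pochhammer t (Suc (Suc n))"
  proof -
    have p1: "pochhammer t (Suc (Suc n)) = t * pochhammer (t+1) (Suc n)" by (rule pochhammer_rec)
    have p2: "pochhammer t (Suc (Suc n)) = pochhammer t (Suc n) * (t + real (Suc n))" by (rule pochhammer_Suc)
    have a: "pochhammer t (Suc n) > 0" "pochhammer (t+1) (Suc n) > 0"
      using Suc.prems by (auto intro!: pochhammer_pos)
    have e1: "fact n / pochhammer t (Suc n) = fact n * (t + real (Suc n)) / pochhammer t (Suc (Suc n))"
      proof -
      have "t + real (Suc n) \<noteq> 0" using Suc.prems by simp
      then show ?thesis unfolding p2 by (rule nonzero_mult_divide_mult_cancel_right[symmetric])
    qed
    have e2: "fact n / pochhammer (t+1) (Suc n) = fact n * t / pochhammer t (Suc (Suc n))"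
      using a Suc.prems unfolding p1 by (simp add: field_simps)
    show ?thesis unfolding e1 e2 by (simp add: diff_divide_distrib[symmetric] algebra_simps)
  qed
  finally show ?case .
qed

lemma D_main: "m \<le> n \<Longrightarrow> t > 0 \<Longrightarrow>
  D n (\<lambda>k. (\<Prod>j<m. real k / 2 + b j) / (real k + t)) = fact n * (\<Prod>j<m. b j - t / 2) / pochhammer t (Suc n)"
proof (induction m)
  case 0
  then show ?case using D_base[of t n] by simp
next
  case (Suc m)
  have eq: "(\<lambda>k. (\<Prod>j<Suc m. real k / 2 + b j) / (real k + t)) =
    (\<lambda>k. (1/2) * (\<Prod>j<m. real k / 2 + b j) + (b m - t/2) * ((\<Prod>j<m. real k / 2 + b j) / (real k + t)))"
  proof
    fix k
    have "real k + t \<noteq> 0" using Suc.prems by (smt (verit) of_nat_0_le_iff)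
    then show "(\<Prod>j<Suc m. real k / 2 + b j) / (real k + t) =
      (1/2) * (\<Prod>j<m. real k / 2 + b j) + (b m - t/2) * ((\<Prod>j<m. real k / 2 + b j) / (real k + t))"
      by (simp add: field_simps)
  qed
  have v: "D n (\<lambda>k. \<Prod>j<m. real k / 2 + b j) = 0" using Suc.prems by (intro D_vanish) simp
  show ?case unfolding eq D_add D_cmult v using Suc by simp
qed

lemma neg1_pow_diff: "k \<le> n \<Longrightarrow> (-1::real)^(n-k) = (-1)^n * (-1)^k"
proof -
  assume "k \<le> n"
  then have "(-1::real)^n = (-1)^(n-k) * (-1)^k" by (metis power_add le_add_diff_inverse2)
  then have "(-1::real)^n * (-1)^k = (-1)^(n-k) * ((-1)^k * (-1)^k)" by (simp add: mult.assoc)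
  also have "(-1::real)^k * (-1)^k = 1" by (simp flip: power_add)
  finally show ?thesis by simp
qed

lemma int_mono: "s > -1 \<Longrightarrow> ((\<lambda>x. x ^ k * x powr s) has_integral (1 / (real k + s + 1))) {0..1::real}"
proof -
  assume s: "s > -1"
  have "((\<lambda>x. x powr (real k + s)) has_integral (1 powr (real k + s + 1) / (real k + s + 1))) {0..1::real}"
    by (rule has_integral_powr_from_0) (use s in auto)
  then have h: "((\<lambda>x. x powr (real k + s)) has_integral (1 / (real k + s + 1))) {0..1::real}" by simp
  show ?thesis
  proof (rule has_integral_eq[OF _ h])
    fix x :: real assume "x \<in> {0..1}"
    then show "x powr (real k + s) = x ^ k * x powr s"
      by (cases "x = 0") (auto simp: powr_add powr_realpow)
  qed
qed

lemma key:
  assumes s: "s > -1"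
  shows "integral {0..1} (\<lambda>x. (\<Sum>k=0..n. real (n choose k) * (pochhammer (real k / 2 + a) n / fact n) * (-1)^(n-k) * x^k) * x powr s)
     = (-1)^n * pochhammer (a - (s+1)/2) n / pochhammer (s+1) (n+1)"
proof -
  let ?c = "\<lambda>k. real (n choose k) * (pochhammer (real k / 2 + a) n / fact n) * (-1)^(n-k)"
  have hi: "((\<lambda>x. (\<Sum>k=0..n. ?c k * x^k) * x powr s) has_integral (\<Sum>k=0..n. ?c k * (1 / (real k + s + 1)))) {0..1}"
  proof -
    have "((\<lambda>x. \<Sum>k=0..n. ?c k * (x^k * x powr s)) has_integral (\<Sum>k=0..n. ?c k * (1 / (real k + s + 1)))) {0..1}"
      by (intro has_integral_sum has_integral_mult_right int_mono s) auto
    then show ?thesis by (simp add: sum_distrib_right mult.assoc)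
  qed
  have "(\<Sum>k=0..n. ?c k * (1 / (real k + s + 1))) =
     (-1)^n / fact n * D n (\<lambda>k. (\<Prod>j<n. real k / 2 + (a + real j)) / (real k + (s + 1)))"
    unfolding D_def atLeast0AtMost sum_distrib_left
  proof (rule sum.cong[OF refl])
    fix k assume "k \<in> {..n}"
    then have "(-1::real)^(n-k) = (-1)^n * (-1)^k" by (intro neg1_pow_diff) simp
    moreover have "pochhammer (real k / 2 + a) n = (\<Prod>j<n. real k / 2 + (a + real j))"
      by (simp add: pochhammer_prod lessThan_atLeast0 add.assoc)
    ultimately show "?c k * (1 / (real k + s + 1)) =
      (-1)^n / fact n * (real (n choose k) * (-1)^k * ((\<Prod>j<n. real k / 2 + (a + real j)) / (real k + (s + 1))))"
      by (simp add: field_simps)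
  qed
  also have "\<dots> = (-1)^n / fact n * (fact n * (\<Prod>j<n. a + real j - (s+1)/2) / pochhammer (s+1) (Suc n))"
    using s by (subst D_main) auto
  also have "(\<Prod>j<n. a + real j - (s+1)/2) = pochhammer (a - (s+1)/2) n"
    by (simp add: pochhammer_prod lessThan_atLeast0 algebra_simps)
  finally show ?thesis using integral_unique[OF hi] by simp
qed

theorem mainTheorem3:
  fixes n :: nat and s :: real
  assumes "s > -1"
  shows "(integral {0..1} (\<lambda>x. p_poly n x * x powr s)
           = (-1) ^ n * pochhammer (1/2 - s/2) n / pochhammer (s + 1) (n + 1)) \<and>
         (integral {0..1} (\<lambda>x. q_poly n x * x powr s)
           = (-1) ^ n * pochhammer (- s/2) n / pochhammer (s + 1) (n + 1))"
proof
  have "p_poly n = (\<lambda>x. \<Sum>k=0..n. real (n choose k) * (pochhammer (real k / 2 + 1) n / fact n) * (-1)^(n-k) * x^k)"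
    by (simp add: p_poly_def gbinom_def fun_eq_iff)
  moreover have "1 - (s+1)/2 = 1/2 - s/2" by (simp add: diff_divide_distrib add_divide_distrib)
  ultimately show "integral {0..1} (\<lambda>x. p_poly n x * x powr s)
           = (-1) ^ n * pochhammer (1/2 - s/2) n / pochhammer (s + 1) (n + 1)"
    using key[OF assms, of n 1] by simp
next
  have e: "\<And>k. (real k - 1) / 2 + 1 = real k / 2 + 1/2" by (simp add: field_simps)
  have "q_poly n = (\<lambda>x. \<Sum>k=0..n. real (n choose k) * (pochhammer (real k / 2 + 1/2) n / fact n) * (-1)^(n-k) * x^k)"
    by (simp add: q_poly_def gbinom_def fun_eq_iff e)
  moreover have "1/2 - (s+1)/2 = - s/2" by (simp add: diff_divide_distrib add_divide_distrib)
  ultimately show "integral {0..1} (\<lambda>x. q_poly n x * x powr s)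
           = (-1) ^ n * pochhammer (- s/2) n / pochhammer (s + 1) (n + 1)"
    using key[OF assms, of n "1/2"] by simp
qed

end
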